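(* The function $D(\lambda)=\lambda\, s(\lambda)\,\underline{s}(\lambda)$ is decreasing and convex on $(\lambda^*,\infty)$.
   Context: $\mu$ and $\underline{\mu}$ are compactly supported probability measures on $[0,\infty)$ (the limiting spectral distributions of $\mathbf{N}\mathbf{N}^T$ and $\mathbf{N}^T\mathbf{N}$ for a $k\times l$ noise matrix $\mathbf{N}$, with $k/l\to\gamma$), and $\lambda^*>0$ denotes the right endpoint of the support of $\mu$, which also bounds the support of $\underline{\mu}$ (since $d\underline{\mu}=\gamma\,d\mu+(1-\gamma)\delta_0$). For real $\lambda>\lambda^*$, $s(\lambda)=\int\frac{d\mu(t)}{t-\lambda}$ and $\underline{s}(\lambda)=\int\frac{d\underline{\mu}(t)}{t-\lambda}$. *)

theory Defs
  imports "HOL-Probability.Probability"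
begin

definition measure_support :: "real measure \<Rightarrow> real set" where
  "measure_support M = {x. \<forall>e>0. 0 < emeasure M (ball x e)}"

definition stieltjes :: "real measure \<Rightarrow> real \<Rightarrow> real" where
  "stieltjes M l = (\<integral>t. 1 / (t - l) \<partial>M)"

end

theory Submission imports Defs begin

lemma meas:
  fixes c l :: real
  assumes S: "sets M = sets borel"
  shows "(\<lambda>t. c / (l - t)) \<in> borel_measurable M"
  unfolding measurable_cong_sets[OF S refl]
  by measurable

lemma integ:
  fixes c l L :: real
  assumes P: "prob_space M" and S: "sets M = sets borel"
    and AE: "AE t in M. 0 \<le> t \<and> t \<le> L" and l: "L < l"
  shows "integrable M (\<lambda>t. c / (l - t))"
proof -
  have i1: "integrable M (\<lambda>_. \<bar>c\<bar> / (l - L))"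
    using P by (intro finite_measure.integrable_const) (simp add: prob_space_def)
  have ae: "AE t in M. norm (c / (l - t)) \<le> norm (\<bar>c\<bar> / (l - L))"
    using AE
  proof eventually_elim
    case (elim t)
    then have h: "l - L \<le> l - t" "0 < l - L" "0 < l - t" using l by auto
    have "norm (c / (l - t)) = \<bar>c\<bar> / (l - t)" using h(3) by (simp only: real_norm_def abs_divide)
    also have "\<dots> \<le> \<bar>c\<bar> / (l - L)"
      by (rule divide_left_mono) (use h in auto)
    also have "\<dots> = norm (\<bar>c\<bar> / (l - L))" using h by simp
    finally show ?case .
  qed
  show ?thesis by (rule Bochner_Integration.integrable_bound[OF i1 meas[OF S] ae])
qed

lemma int_const:
  assumes P: "prob_space M" shows "(\<integral>t. c \<partial>M) = (c::real)"
  using P by (simp add: prob_space.prob_space)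

lemma supp_null:
  assumes S: "sets M = sets borel" and sub: "measure_support M \<subseteq> {..c}"
  shows "{c<..} \<in> null_sets M"
proof -
  define F where "F = {ball x e | x e. c < x \<and> 0 < e \<and> emeasure M (ball x e) = 0}"
  have "\<And>B. B \<in> F \<Longrightarrow> open B" unfolding F_def by auto
  then obtain F' where F': "F' \<subseteq> F" "countable F'" "\<Union>F' = \<Union>F" by (rule Lindelof)
  have cov: "{c<..} \<subseteq> \<Union>F"
  proof
    fix x assume "x \<in> {c<..}"
    then have "x \<notin> measure_support M" "c < x" using sub by auto
    then obtain e where "e > 0" "\<not> 0 < emeasure M (ball x e)" unfolding measure_support_def by auto
    then have "ball x e \<in> F" using \<open>c < x\<close> unfolding F_def by (auto simp: zero_less_iff_neq_zero)
    then show "x \<in> \<Union>F" using \<open>e > 0\<close> by (intro UnionI[of "ball x e"]) auto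
  qed
  have nU: "(\<Union>B\<in>F'. B) \<in> null_sets M"
  proof (rule null_sets_UN')
    show "countable F'" by fact
    fix B assume "B \<in> F'"
    then have "B \<in> F" using F' by blast
    then obtain x e where B: "B = ball x e" "emeasure M (ball x e) = 0" unfolding F_def by blast
    have "ball x e \<in> sets M" using S by simp
    then show "B \<in> null_sets M" using B by (simp add: null_setsI)
  qed
  have sc: "{c<..} \<in> sets M" using S by simp
  have sub2: "{c<..} \<subseteq> (\<Union>B\<in>F'. B)" using cov F'(3) by simp
  show ?thesis by (rule null_sets_subset[OF nU sc sub2])
qed

lemma conv_pt:
  fixes a b t :: real
  assumes "0 < a" "0 < b" "0 < t" "t < 1"
  shows "1 / ((1 - t) * a + t * b) \<le> (1 - t) / a + t / b"
proof -
  have pos: "0 < (1 - t) * a + t * b" using assms by (simp add: add_pos_pos)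
  have "1 \<le> ((1 - t) * a + t * b) * ((1 - t) / a + t / b)"
  proof -
    have "((1 - t) * a + t * b) * ((1 - t) / a + t / b) = (1-t)^2 + t^2 + t*(1-t)*(a/b + b/a)"
      using assms by (simp add: field_simps power2_eq_square)
    moreover have "a/b + b/a \<ge> 2"
    proof -
      have "a/b + b/a - 2 = (a - b)^2 / (a*b)" using assms by (simp add: field_simps power2_eq_square)
      moreover have "(a - b)^2 / (a*b) \<ge> 0" using assms by simp
      ultimately show ?thesis by linarith
    qed
    moreover have "t*(1-t) \<ge> 0" using assms by simp
    ultimately have "t*(1-t)*(a/b+b/a) \<ge> t*(1-t)*2" by (intro mult_left_mono) auto
    moreover have "(1-t)^2 + t^2 + t*(1-t)*2 = 1" by (simp add: power2_eq_square algebra_simps)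
    ultimately show ?thesis using \<open>((1 - t) * a + t * b) * ((1 - t) / a + t / b) = (1-t)^2 + t^2 + t*(1-t)*(a/b + b/a)\<close> by linarith
  qed
  then show ?thesis using pos by (simp add: divide_le_eq mult.commute)
qed

lemma conv_int:
  fixes f :: "real \<Rightarrow> real \<Rightarrow> real"
  assumes int: "\<And>l. L < l \<Longrightarrow> integrable M (f l)"
    and pt: "\<And>x y s. L < x \<Longrightarrow> L < y \<Longrightarrow> 0 < s \<Longrightarrow> s < 1 \<Longrightarrow>
       AE t in M. f ((1 - s) * x + s * y) t \<le> (1 - s) * f x t + s * f y t"
  shows "convex_on {L<..} (\<lambda>l. \<integral>t. f l t \<partial>M)"
proof (rule convex_onI)
  show "convex {L<..}" by simp
  fix s x y :: real assume s: "0 < s" "s < 1" and xy: "x \<in> {L<..}" "y \<in> {L<..}"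
  have z: "L < (1 - s) * x + s * y"
  proof -
    have "(1 - s) * L < (1 - s) * x" "s * L < s * y" using s xy by auto
    then show ?thesis by (simp add: algebra_simps)
  qed
  have "integrable M (\<lambda>t. (1 - s) * f x t + s * f y t)"
    using int[of x] int[of y] xy by simp
  then have "(\<integral>t. f ((1 - s) * x + s * y) t \<partial>M) \<le> (\<integral>t. (1 - s) * f x t + s * f y t \<partial>M)"
    using xy z s by (intro integral_mono_AE int pt) auto
  also have "\<dots> = (1 - s) * (\<integral>t. f x t \<partial>M) + s * (\<integral>t. f y t \<partial>M)"
    using xy int by simp
  finally show "(\<integral>t. f ((1 - s) *\<^sub>R x + s *\<^sub>R y) t \<partial>M) \<le> (1 - s) * (\<integral>t. f x t \<partial>M) + s * (\<integral>t. f y t \<partial>M)"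
    by simp
qed

lemma conv_prod:
  fixes f g :: "real \<Rightarrow> real"
  assumes cf: "convex_on {L<..} f" and cg: "convex_on {L<..} g"
    and pf: "\<And>x. L < x \<Longrightarrow> 0 < f x" and pg: "\<And>x. L < x \<Longrightarrow> 0 < g x"
    and mf: "\<And>x y. L < x \<Longrightarrow> x \<le> y \<Longrightarrow> f y \<le> f x"
    and mg: "\<And>x y. L < x \<Longrightarrow> x \<le> y \<Longrightarrow> g y \<le> g x"
  shows "convex_on {L<..} (\<lambda>l. f l * g l)"
proof (rule convex_onI)
  show "convex {L<..}" by simp
  fix s x y :: real assume s: "0 < s" "s < 1" and xy: "x \<in> {L<..}" "y \<in> {L<..}"
  define z where "z = (1 - s) * x + s * y"
  have z: "L < z"
  proof -
    have "(1 - s) * L < (1 - s) * x" "s * L < s * y" using s xy by auto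
    then show ?thesis unfolding z_def by (simp add: algebra_simps)
  qed
  have f1: "f z \<le> (1 - s) * f x + s * f y" using convex_onD[OF cf, of s x y] s xy by (simp add: z_def)
  have g1: "g z \<le> (1 - s) * g x + s * g y" using convex_onD[OF cg, of s x y] s xy by (simp add: z_def)
  have "f z * g z \<le> ((1 - s) * f x + s * f y) * ((1 - s) * g x + s * g y)"
    using f1 g1 pf[OF z] pg[OF z] by (intro mult_mono) auto
  also have "\<dots> \<le> (1 - s) * (f x * g x) + s * (f y * g y)"
  proof -
    have "(f x - f y) * (g x - g y) \<ge> 0"
    proof (cases "x \<le> y")
      case True
      then show ?thesis using mf[of x y] mg[of x y] xy by (auto intro: mult_nonneg_nonneg)
    next
      case False
      then have "f x \<le> f y" "g x \<le> g y" using mf[of y x] mg[of y x] xy by auto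
      then show ?thesis by (auto intro: mult_nonpos_nonpos)
    qed
    then have "s * (1 - s) * ((f x - f y) * (g x - g y)) \<ge> 0" using s by simp
    moreover have "(1 - s) * (f x * g x) + s * (f y * g y) - ((1 - s) * f x + s * f y) * ((1 - s) * g x + s * g y)
       = s * (1 - s) * ((f x - f y) * (g x - g y))" by (simp add: algebra_simps)
    ultimately show ?thesis by linarith
  qed
  finally show "f ((1 - s) *\<^sub>R x + s *\<^sub>R y) * g ((1 - s) *\<^sub>R x + s *\<^sub>R y) \<le> (1 - s) * (f x * g x) + s * (f y * g y)"
    by (simp add: z_def)
qed

lemma g_lower:
  fixes L l :: real
  assumes P: "prob_space M" and S: "sets M = sets borel"
    and AE: "AE t in M. 0 \<le> t \<and> t \<le> L" and L: "0 < L" and l: "L < l"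
  shows "1 / l \<le> (\<integral>t. 1 / (l - t) \<partial>M)"
proof -
  have "(\<integral>t. 1 / l \<partial>M) \<le> (\<integral>t. 1 / (l - t) \<partial>M)"
  proof (rule integral_mono_AE)
    show "integrable M (\<lambda>t. 1 / l)" using P by (intro finite_measure.integrable_const) (simp add: prob_space_def)
    show "integrable M (\<lambda>t. 1 / (l - t))" by (rule integ[OF P S AE l])
    show "AE t in M. 1 / l \<le> 1 / (l - t)" using AE
    proof eventually_elim
      case (elim t) then show ?case using L l by (intro divide_left_mono) auto
    qed
  qed
  then show ?thesis using prob_space.prob_space[OF P] by simp
qed

lemma g_strict:
  fixes L x y :: real
  assumes P: "prob_space M" and S: "sets M = sets borel"
    and AE: "AE t in M. 0 \<le> t \<and> t \<le> L" and L: "0 < L" and xy: "L < x" "x < y"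
  shows "(\<integral>t. 1 / (y - t) \<partial>M) < (\<integral>t. 1 / (x - t) \<partial>M)"
proof -
  have iy: "integrable M (\<lambda>t. 1 / (y - t))" by (rule integ[OF P S AE]) (use xy in auto)
  have ix: "integrable M (\<lambda>t. 1 / (x - t))" by (rule integ[OF P S AE]) (use xy in auto)
  have ic: "integrable M (\<lambda>t. (y - x) / (x * y))" using P by (intro finite_measure.integrable_const) (simp add: prob_space_def)
  have "(\<integral>t. 1 / (y - t) + (y - x) / (x * y) \<partial>M) \<le> (\<integral>t. 1 / (x - t) \<partial>M)"
  proof (rule integral_mono_AE)
    show "integrable M (\<lambda>t. 1 / (y - t) + (y - x) / (x * y))"
      by (rule Bochner_Integration.integrable_add[OF iy ic])
    show "integrable M (\<lambda>t. 1 / (x - t))" by (rule ix)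
    show "AE t in M. 1 / (y - t) + (y - x) / (x * y) \<le> 1 / (x - t)" using AE
    proof eventually_elim
      case (elim t)
      then have t: "0 \<le> t" "t < x" "t < y" using xy by auto
      have "(x - t) * (y - t) \<le> x * y"
      proof -
        have "(x - t) * (y - t) = x * y - t * (x + y - t)" by (simp add: algebra_simps)
        moreover have "t * (x + y - t) \<ge> 0" using t by simp
        ultimately show ?thesis by linarith
      qed
      then have "(y - x) / (x * y) \<le> (y - x) / ((x - t) * (y - t))"
        using t xy L by (intro divide_left_mono) auto
      also have "\<dots> = 1 / (x - t) - 1 / (y - t)" using t by (simp add: field_simps)
      finally show ?case by simp
    qed
  qed
  moreover have "(\<integral>t. 1 / (y - t) + (y - x) / (x * y) \<partial>M) = (\<integral>t. 1 / (y - t) \<partial>M) + (y - x) / (x * y)"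
    using Bochner_Integration.integral_add[OF iy ic] prob_space.prob_space[OF P] by simp
  moreover have "(y - x) / (x * y) > 0" using xy L by simp
  ultimately show ?thesis by linarith
qed

lemma A_lower:
  fixes L l :: real
  assumes P: "prob_space M" and S: "sets M = sets borel"
    and AE: "AE t in M. 0 \<le> t \<and> t \<le> L" and l: "L < l"
  shows "1 \<le> (\<integral>t. l / (l - t) \<partial>M)"
proof -
  have "(\<integral>t. 1 \<partial>M) \<le> (\<integral>t. l / (l - t) \<partial>M)"
  proof (rule integral_mono_AE)
    show "integrable M (\<lambda>t. 1::real)" using P by (intro finite_measure.integrable_const) (simp add: prob_space_def)
    show "integrable M (\<lambda>t. l / (l - t))" by (rule integ[OF P S AE l])
    show "AE t in M. 1 \<le> l / (l - t)" using AE
    proof eventually_elim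
      case (elim t) then show ?case using l by (simp add: le_divide_eq)
    qed
  qed
  then show ?thesis using prob_space.prob_space[OF P] by simp
qed

lemma A_mono:
  fixes L x y :: real
  assumes P: "prob_space M" and S: "sets M = sets borel"
    and AE: "AE t in M. 0 \<le> t \<and> t \<le> L" and xy: "L < x" "x \<le> y"
  shows "(\<integral>t. y / (y - t) \<partial>M) \<le> (\<integral>t. x / (x - t) \<partial>M)"
proof (rule integral_mono_AE)
  show "integrable M (\<lambda>t. y / (y - t))" by (rule integ[OF P S AE]) (use xy in auto)
  show "integrable M (\<lambda>t. x / (x - t))" by (rule integ[OF P S AE]) (use xy in auto)
  show "AE t in M. y / (y - t) \<le> x / (x - t)" using AE
  proof eventually_elim
    case (elim t)
    then have t: "0 \<le> t" "t < x" "t < y" using xy by auto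
    have "y * (x - t) \<le> x * (y - t)" using t xy by (simp add: algebra_simps mult_left_mono)
    then show ?case using t by (simp add: divide_simps)
  qed
qed

lemma g_conv:
  fixes L :: real
  assumes P: "prob_space M" and S: "sets M = sets borel"
    and AE: "AE t in M. 0 \<le> t \<and> t \<le> L"
  shows "convex_on {L<..} (\<lambda>l. \<integral>t. 1 / (l - t) \<partial>M)"
proof (rule conv_int)
  show "\<And>l. L < l \<Longrightarrow> integrable M (\<lambda>t. 1 / (l - t))" by (rule integ[OF P S AE])
  fix x y s :: real assume xy: "L < x" "L < y" and s: "0 < s" "s < 1"
  show "AE t in M. 1 / ((1 - s) * x + s * y - t) \<le> (1 - s) * (1 / (x - t)) + s * (1 / (y - t))"
    using AE
  proof eventually_elim
    case (elim t)
    have "(1 - s) * x + s * y - t = (1 - s) * (x - t) + s * (y - t)" by (simp add: algebra_simps)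
    then show ?case using conv_pt[of "x - t" "y - t" s] elim xy s by simp
  qed
qed

lemma A_conv:
  fixes L :: real
  assumes P: "prob_space M" and S: "sets M = sets borel"
    and AE: "AE t in M. 0 \<le> t \<and> t \<le> L"
  shows "convex_on {L<..} (\<lambda>l. \<integral>t. l / (l - t) \<partial>M)"
proof (rule conv_int)
  show "\<And>l. L < l \<Longrightarrow> integrable M (\<lambda>t. l / (l - t))" by (rule integ[OF P S AE])
  fix x y s :: real assume xy: "L < x" "L < y" and s: "0 < s" "s < 1"
  show "AE t in M. ((1 - s) * x + s * y) / ((1 - s) * x + s * y - t) \<le> (1 - s) * (x / (x - t)) + s * (y / (y - t))"
    using AE
  proof eventually_elim
    case (elim t)
    define z where "z = (1 - s) * x + s * y"
    have zt: "z - t = (1 - s) * (x - t) + s * (y - t)" by (simp add: algebra_simps z_def)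
    have c: "1 / (z - t) \<le> (1 - s) / (x - t) + s / (y - t)"
      using conv_pt[of "x - t" "y - t" s] elim xy s zt by simp
    have pos: "0 < z - t" using zt elim xy s by (simp add: add_pos_pos)
    have ex: "0 < x - t" "0 < y - t" using elim xy by auto
    have dz: "z / (z - t) = 1 + t * (1 / (z - t))" using pos by (simp add: field_simps)
    have dx: "x / (x - t) = 1 + t * (1 / (x - t))" using ex by (simp add: field_simps)
    have dy: "y / (y - t) = 1 + t * (1 / (y - t))" using ex by (simp add: field_simps)
    have "z / (z - t) = 1 + t * (1 / (z - t))" by (rule dz)
    also have "\<dots> \<le> 1 + t * ((1 - s) / (x - t) + s / (y - t))"
      using c elim by (intro add_left_mono mult_left_mono) auto
    also have "\<dots> = (1 - s) * (1 + t * (1 / (x - t))) + s * (1 + t * (1 / (y - t)))"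
      by (simp add: algebra_simps)
    also have "\<dots> = (1 - s) * (x / (x - t)) + s * (y / (y - t))"
      by (simp only: dx dy)
    finally show ?case by (simp add: z_def)
  qed
qed


lemma stieltjes_eq:
  "l * stieltjes M l = - (\<integral>t. l / (l - t) \<partial>M)" "stieltjes M l = - (\<integral>t. 1 / (l - t) \<partial>M)"
proof -
  have e: "(\<lambda>t. 1 / (t - l)) = (\<lambda>t. - (1 / (l - t)))"
    by (rule ext) (simp add: divide_minus_right[symmetric])
  show s: "stieltjes M l = - (\<integral>t. 1 / (l - t) \<partial>M)"
    unfolding stieltjes_def e by simp
  have "l * (\<integral>t. 1 / (l - t) \<partial>M) = (\<integral>t. l / (l - t) \<partial>M)"
    by (simp add: integral_mult_right_zero[symmetric])
  then show "l * stieltjes M l = - (\<integral>t. l / (l - t) \<partial>M)" using s by simp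
qed

lemma AE_supp:
  assumes P: "prob_space M" and S: "sets M = sets borel"
    and n: "measure M {..<0::real} = 0" and sub: "measure_support M \<subseteq> {..L}"
  shows "AE t in M. 0 \<le> t \<and> t \<le> L"
proof -
  have "{..<0::real} \<in> null_sets M"
  proof (rule null_setsI)
    show "{..<0::real} \<in> sets M" using S by simp
    then show "emeasure M {..<0} = 0"
      using n P by (simp add: prob_space_def finite_measure.emeasure_eq_measure)
  qed
  from AE_not_in[OF this] AE_not_in[OF supp_null[OF S sub]]
  show ?thesis by eventually_elim auto
qed

theorem proposition2p4:
  fixes \<mu> \<mu>u :: "real measure" and \<gamma> lstar :: real
  assumes prob: "prob_space \<mu>" and sets: "sets \<mu> = sets borel"
      and prob_u: "prob_space \<mu>u" and sets_u: "sets \<mu>u = sets borel"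
      and nonneg: "measure \<mu> {..<0} = 0" and nonneg_u: "measure \<mu>u {..<0} = 0"
      and compact: "compact (measure_support \<mu>)"
      and gamma: "\<gamma> > 0"
      and rel: "\<forall>A \<in> sets borel. measure \<mu>u A = \<gamma> * measure \<mu> A + (1 - \<gamma>) * indicator A (0::real)"
      and lstar: "lstar = Sup (measure_support \<mu>)" and lstar_pos: "lstar > 0"
      and bound_u: "measure_support \<mu>u \<subseteq> {..lstar}"
  shows "(\<forall>x y. lstar < x \<longrightarrow> x < y \<longrightarrow>
            y * stieltjes \<mu> y * stieltjes \<mu>u y < x * stieltjes \<mu> x * stieltjes \<mu>u x)
       \<and> convex_on {lstar<..} (\<lambda>l. l * stieltjes \<mu> l * stieltjes \<mu>u l)"
proof -
  have "measure_support \<mu> \<subseteq> {..lstar}"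
  proof
    fix x assume "x \<in> measure_support \<mu>"
    moreover have "bdd_above (measure_support \<mu>)"
      using compact by (simp add: bounded_imp_bdd_above compact_imp_bounded)
    ultimately show "x \<in> {..lstar}" unfolding lstar by (simp add: cSup_upper)
  qed
  then have AE1: "AE t in \<mu>. 0 \<le> t \<and> t \<le> lstar" by (rule AE_supp[OF prob sets nonneg])
  have AE2: "AE t in \<mu>u. 0 \<le> t \<and> t \<le> lstar" by (rule AE_supp[OF prob_u sets_u nonneg_u bound_u])
  define A where "A l = (\<integral>t. l / (l - t) \<partial>\<mu>)" for l
  define g where "g l = (\<integral>t. 1 / (l - t) \<partial>\<mu>u)" for l
  have D: "l * stieltjes \<mu> l * stieltjes \<mu>u l = A l * g l" for l
    unfolding A_def g_def using stieltjes_eq[where M=\<mu> and l=l] stieltjes_eq[where M=\<mu>u and l=l] by simp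
  have Apos: "0 < A l" if "lstar < l" for l
    using A_lower[OF prob sets AE1 that] unfolding A_def by simp
  have gpos: "0 < g l" if "lstar < l" for l
  proof -
    have "0 < 1 / l" using that lstar_pos by simp
    then show ?thesis using g_lower[OF prob_u sets_u AE2 lstar_pos that] unfolding g_def by linarith
  qed
  have Amono: "A y \<le> A x" if "lstar < x" "x \<le> y" for x y
    using A_mono[OF prob sets AE1 that] unfolding A_def by simp
  have gstrict: "g y < g x" if "lstar < x" "x < y" for x y
    using g_strict[OF prob_u sets_u AE2 lstar_pos that] unfolding g_def by simp
  have gmono: "g y \<le> g x" if "lstar < x" "x \<le> y" for x y
    using gstrict[of x y] that by (cases "x = y") auto
  have part1: "\<forall>x y. lstar < x \<longrightarrow> x < y \<longrightarrow> A y * g y < A x * g x"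
  proof (intro allI impI)
    fix x y assume xy: "lstar < x" "x < y"
    have "A y * g y \<le> A x * g y" using Amono[of x y] gpos[of y] xy by (intro mult_right_mono) auto
    also have "\<dots> < A x * g x" using Apos[of x] gstrict[of x y] xy by (intro mult_strict_left_mono) auto
    finally show "A y * g y < A x * g x" .
  qed
  have cA: "convex_on {lstar<..} A" unfolding A_def by (rule A_conv[OF prob sets AE1])
  have cg: "convex_on {lstar<..} g" unfolding g_def by (rule g_conv[OF prob_u sets_u AE2])
  have part2: "convex_on {lstar<..} (\<lambda>l. A l * g l)"
    by (rule conv_prod[OF cA cg Apos gpos Amono gmono])
  show ?thesis unfolding D using part1 part2 by simp
qed

end
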